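(* Assume $\sum_{i=1}^M b_i\ge1$ and let $\mathbf r^\star(\epsilon)$ be the energy-adequate solution. Then $\lim_{\epsilon\to0^+}|\bar\Delta(\mathbf r^\star(\epsilon))-\bar\Delta_{\mathrm{opt}}(\epsilon)|=0$, and $$\lim_{\epsilon\to0^+}\bar\Delta_{\mathrm{opt}}(\epsilon)=\sum_{i=1}^M\Big[\frac{w_i}{\min\{b_i,\beta^\star\sqrt{w_i}\}}+w_i\Big].$$
   Context: Fix an integer $M\ge1$, weights $w_1,\dots,w_M>0$, constants $b_1,\dots,b_M>0$, and $\epsilon>0$. For $\mathbf r\in(0,\infty)^M$ write $S(\mathbf r)=\sum_{i=1}^M r_i$ and define $$\bar\Delta(\mathbf r)=\sum_{l=1}^M \frac{w_l e^{-r_l\epsilon}}{r_l}\, e^{\epsilon S(\mathbf r)}\big(1+S(\mathbf r)\big)+\sum_{l=1}^M w_l,\qquad \sigma_l(\mathbf r)=\frac{(1-e^{-r_l\epsilon})S(\mathbf r)+r_le^{-r_l\epsilon}}{S(\mathbf r)+1}.$$ Problem 1: minimize $\bar\Delta(\mathbf r)$ over $\mathbf r\in(0,\infty)^M$ subject to $\sigma_l(\mathbf r)\le b_l$ for all $l$; its optimal (infimum) value is $\bar\Delta_{\mathrm{opt}}(\epsilon)$. Energy-adequate solution (when $\sum_i b_i\ge1$): let $\beta^\star\in[0,\max_l b_l/\sqrt{w_l}]$ be the root of $\sum_{i=1}^M\min\{b_i,\beta^\star\sqrt{w_i}\}=1$, let $x^\star=-\tfrac12+\sqrt{\tfrac14+\tfrac1\epsilon}$,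 and set $r^\star_l=\min\{b_l,\beta^\star\sqrt{w_l}\}\,x^\star$. *)

theory Defs
  imports "HOL-Analysis.Analysis"
begin

text \<open>Indices are 0..M-1 (i.e. the set {..<M}); vectors r are functions nat => real,
 only the values at indices < M matter.\<close>

definition Ssum :: "nat \<Rightarrow> (nat \<Rightarrow> real) \<Rightarrow> real" where
  "Ssum M r = (\<Sum>i<M. r i)"

definition Delta_bar :: "nat \<Rightarrow> (nat \<Rightarrow> real) \<Rightarrow> real \<Rightarrow> (nat \<Rightarrow> real) \<Rightarrow> real" where
  "Delta_bar M w eps r =
     (\<Sum>l<M. w l * exp (- r l * eps) / r l) * exp (eps * Ssum M r) * (1 + Ssum M r)
     + (\<Sum>l<M. w l)"

definition sigma :: "nat \<Rightarrow> real \<Rightarrow> (nat \<Rightarrow> real) \<Rightarrow> nat \<Rightarrow> real" where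
  "sigma M eps r l =
     ((1 - exp (- r l * eps)) * Ssum M r + r l * exp (- r l * eps)) / (Ssum M r + 1)"

definition feasible :: "nat \<Rightarrow> (nat \<Rightarrow> real) \<Rightarrow> real \<Rightarrow> (nat \<Rightarrow> real) \<Rightarrow> bool" where
  "feasible M b eps r \<longleftrightarrow> (\<forall>l<M. 0 < r l \<and> sigma M eps r l \<le> b l)"

definition Delta_opt :: "nat \<Rightarrow> (nat \<Rightarrow> real) \<Rightarrow> (nat \<Rightarrow> real) \<Rightarrow> real \<Rightarrow> real" where
  "Delta_opt M w b eps = Inf {Delta_bar M w eps r | r. feasible M b eps r}"

definition x_star :: "real \<Rightarrow> real" where
  "x_star eps = - 1/2 + sqrt (1/4 + 1/eps)"

definition r_star :: "(nat \<Rightarrow> real) \<Rightarrow> (nat \<Rightarrow> real) \<Rightarrow> real \<Rightarrow> real \<Rightarrow> nat \<Rightarrow> real" where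
  "r_star w b beta eps l = min (b l) (beta * sqrt (w l)) * x_star eps"

end

theory Submission
  imports Defs "HOL-Real_Asymp.Real_Asymp"
begin

lemma term_bound:
  fixes w b beta p :: real
  assumes "w > 0" "b > 0" "beta > 0" "0 < p" "p \<le> b"
  shows "w / min b (beta * sqrt w) + (min b (beta * sqrt w) - p) / beta^2 \<le> w / p"
proof -
  define c where "c = min b (beta * sqrt w)"
  have cpos: "c > 0" using assms by (simp add: c_def)
  have c2: "c^2 \<le> beta^2 * w"
  proof -
    have "c \<le> beta * sqrt w" by (simp add: c_def)
    hence "c^2 \<le> (beta * sqrt w)^2" using cpos by (intro power_mono) auto
    thus ?thesis using assms by (simp add: power_mult_distrib)
  qed
  have key: "w / c + (w / c^2) * (c - p) \<le> w / p"
  proof -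
    have "w / p - (w / c + (w / c^2) * (c - p)) = w * (c - p)^2 / (p * c^2)"
      using cpos assms by (simp add: field_simps power2_eq_square)
    also have "\<dots> \<ge> 0" using cpos assms by simp
    finally show ?thesis by simp
  qed
  have "(c - p) / beta^2 \<le> (w / c^2) * (c - p)"
  proof (cases "p \<le> c")
    case True
    have "1 / beta^2 \<le> w / c^2" using c2 cpos assms
      by (simp add: field_simps)
    thus ?thesis using True by (metis divide_le_cancel diff_ge_0_iff_ge mult_right_mono times_divide_eq_left mult_1)
  next
    case False
    hence "c < b" using assms by simp
    hence "c = beta * sqrt w" by (auto simp: c_def min_def split: if_splits)
    hence "w / c^2 = 1 / beta^2" using assms by (simp add: power_mult_distrib)
    thus ?thesis by simp
  qed
  with key show ?thesis unfolding c_def by linarith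
qed

lemma water_fill:
  fixes M :: nat and w b p :: "nat \<Rightarrow> real" and beta :: real
  assumes "\<forall>l<M. w l > 0" "\<forall>l<M. b l > 0" "beta > 0"
    and "(\<Sum>i<M. min (b i) (beta * sqrt (w i))) = 1"
    and "\<forall>l<M. 0 < p l \<and> p l \<le> b l" "(\<Sum>i<M. p i) \<le> 1"
  shows "(\<Sum>i<M. w i / min (b i) (beta * sqrt (w i))) \<le> (\<Sum>i<M. w i / p i)"
proof -
  have "(\<Sum>i<M. w i / min (b i) (beta * sqrt (w i)) + (min (b i) (beta * sqrt (w i)) - p i) / beta^2)
        \<le> (\<Sum>i<M. w i / p i)"
    using assms by (intro sum_mono term_bound) auto
  moreover have "(\<Sum>i<M. (min (b i) (beta * sqrt (w i)) - p i) / beta^2)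
      = ((\<Sum>i<M. min (b i) (beta * sqrt (w i))) - (\<Sum>i<M. p i)) / beta^2"
    by (simp add: sum_divide_distrib[symmetric] sum_subtractf)
  moreover have "\<dots> \<ge> 0" using assms by simp
  ultimately show ?thesis by (simp add: sum.distrib)
qed

lemma lower:
  fixes M :: nat and w b r :: "nat \<Rightarrow> real" and beta eps :: real
  assumes "\<forall>l<M. w l > 0" "\<forall>l<M. b l > 0" "beta > 0" "eps > 0"
    and "(\<Sum>i<M. min (b i) (beta * sqrt (w i))) = 1"
    and "feasible M b eps r"
  shows "(\<Sum>i<M. w i / min (b i) (beta * sqrt (w i)) + w i) \<le> Delta_bar M w eps r"
proof -
  define S where "S = Ssum M r"
  have rpos: "\<forall>l<M. r l > 0" using assms(6) by (simp add: feasible_def)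
  have Spos: "S \<ge> 0" unfolding S_def Ssum_def using rpos by (intro sum_nonneg) auto
  have rle: "r l \<le> S" if "l < M" for l
    unfolding S_def Ssum_def using rpos that
    by (intro member_le_sum) auto
  define p where "p l = r l / (1 + S)" for l
  have pb: "0 < p l \<and> p l \<le> b l" if l: "l < M" for l
  proof
    show "0 < p l" using rpos l Spos by (simp add: p_def)
    have "sigma M eps r l \<le> b l" using assms(6) l by (simp add: feasible_def)
    moreover have "p l \<le> sigma M eps r l"
    proof -
      have e: "exp (- r l * eps) \<le> 1" using rpos l assms(4) by (simp add: mult_pos_pos less_imp_le)
      have "r l \<le> (1 - exp (- r l * eps)) * S + r l * exp (- r l * eps)"
      proof -
        have "(1 - exp (- r l * eps)) * S + r l * exp (- r l * eps)
             = r l + (1 - exp (- r l * eps)) * (S - r l)" by (simp add: algebra_simps)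
        moreover have "(1 - exp (- r l * eps)) * (S - r l) \<ge> 0" using e rle[OF l] by simp
        ultimately show ?thesis by linarith
      qed
      thus ?thesis unfolding sigma_def p_def S_def using Spos S_def
        by (simp add: add.commute divide_right_mono)
    qed
    ultimately show "p l \<le> b l" by linarith
  qed
  have psum: "(\<Sum>i<M. p i) \<le> 1"
  proof -
    have "(\<Sum>i<M. p i) = S / (1 + S)" unfolding p_def S_def Ssum_def by (simp add: sum_divide_distrib)
    also have "\<dots> \<le> 1" using Spos by simp
    finally show ?thesis .
  qed
  have wf: "(\<Sum>i<M. w i / min (b i) (beta * sqrt (w i))) \<le> (\<Sum>i<M. w i / p i)"
    using water_fill[OF assms(1-3,5)] pb psum by blast
  have "(\<Sum>i<M. w i / p i) \<le> (\<Sum>l<M. w l * exp (- r l * eps) / r l) * exp (eps * S) * (1 + S)"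
  proof -
    have "(\<Sum>l<M. w l * exp (- r l * eps) / r l) * exp (eps * S) * (1 + S)
        = (\<Sum>l<M. w l * exp (- r l * eps) / r l * exp (eps * S) * (1 + S))"
      by (simp add: sum_distrib_right)
    moreover have "w l / p l \<le> w l * exp (- r l * eps) / r l * exp (eps * S) * (1 + S)" if l: "l < M" for l
    proof -
      have "exp (- r l * eps) * exp (eps * S) = exp (eps * (S - r l))"
        by (simp add: exp_add[symmetric] algebra_simps)
      moreover have "exp (eps * (S - r l)) \<ge> 1" using rle[OF l] assms(4) by simp
      ultimately have "w l * exp (- r l * eps) / r l * exp (eps * S) * (1 + S)
          = (w l * (1 + S) / r l) * exp (eps * (S - r l))" by (simp add: field_simps)
      moreover have "(w l * (1 + S) / r l) * exp (eps * (S - r l)) \<ge> w l * (1 + S) / r l"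
      proof -
        have "0 \<le> w l * (1 + S) / r l" using rpos assms(1) l Spos by (simp add: less_imp_le)
        thus ?thesis using \<open>exp (eps * (S - r l)) \<ge> 1\<close> mult_left_mono[of 1 "exp (eps * (S - r l))" "w l * (1 + S) / r l"] by simp
      qed
      moreover have "w l / p l = w l * (1 + S) / r l" by (simp add: p_def)
      ultimately show ?thesis by linarith
    qed
    ultimately show ?thesis by (metis (no_types, lifting) lessThan_iff sum_mono)
  qed
  with wf show ?thesis unfolding Delta_bar_def S_def by (simp add: sum.distrib)
qed

lemma xs_pos: "eps > 0 \<Longrightarrow> x_star eps > 0"
proof -
  assume "eps > 0"
  hence "sqrt (1/4) < sqrt (1/4 + 1/eps)" by (intro real_sqrt_less_mono) simp
  moreover have "sqrt (1/4::real) = 1/2" by (simp add: real_sqrt_divide)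
  ultimately show ?thesis by (simp add: x_star_def)
qed

lemma xs_eq: "eps > 0 \<Longrightarrow> eps * ((x_star eps)^2 + x_star eps) = 1"
proof -
  assume e: "eps > 0"
  have "(x_star eps + 1/2)^2 = 1/4 + 1/eps" using e by (simp add: x_star_def)
  hence "(x_star eps)^2 + x_star eps = 1/eps" by (simp add: power2_eq_square algebra_simps)
  thus ?thesis using e by simp
qed

lemma feas:
  fixes M :: nat and w b :: "nat \<Rightarrow> real" and beta eps :: real
  assumes "\<forall>l<M. w l > 0" "\<forall>l<M. b l > 0" "beta > 0" "eps > 0"
    and "(\<Sum>i<M. min (b i) (beta * sqrt (w i))) = 1"
  shows "feasible M b eps (r_star w b beta eps)"
  unfolding feasible_def
proof (intro allI impI conjI)
  fix l assume l: "l < M"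
  define x where "x = x_star eps"
  define c where "c = min (b l) (beta * sqrt (w l))"
  have xp: "x > 0" using xs_pos assms by (simp add: x_def)
  have xe: "eps * (x^2 + x) = 1" using xs_eq assms by (simp add: x_def)
  have cp: "c > 0" using assms l by (simp add: c_def)
  show "0 < r_star w b beta eps l" using xp cp by (simp add: r_star_def x_def c_def)
  have S: "Ssum M (r_star w b beta eps) = x"
    unfolding Ssum_def r_star_def x_def by (simp add: sum_distrib_right[symmetric] assms(5))
  have rl: "r_star w b beta eps l = c * x" by (simp add: r_star_def c_def x_def)
  define a where "a = c * x * eps"
  have ap: "a \<ge> 0" using cp xp assms by (simp add: a_def)
  have e1: "1 - exp (- a) \<le> a" using exp_ge_add_one_self[of "-a"] by simp
  have e2: "exp (-a) \<le> 1" using ap by simp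
  have "(1 - exp (- a)) * x + c * x * exp (- a) \<le> a * x + c * x"
    using e1 e2 xp cp by (intro add_mono mult_right_mono) (auto intro: mult_left_le)
  also have "\<dots> = c * (eps * x^2 + x)" by (simp add: a_def power2_eq_square algebra_simps)
  also have "\<dots> \<le> c * (1 + x)"
  proof -
    have "eps * x^2 \<le> 1" using xe xp assms(4) by (simp add: algebra_simps) (smt (verit) mult_pos_pos)
    thus ?thesis using cp by (intro mult_left_mono) auto
  qed
  finally have "sigma M eps (r_star w b beta eps) l \<le> c"
    unfolding sigma_def S rl using xp cp by (simp add: a_def field_simps mult.commute mult.left_commute)
  also have "c \<le> b l" by (simp add: c_def)
  finally show "sigma M eps (r_star w b beta eps) l \<le> b l" .
qed

lemma rstar_lim:
  fixes M :: nat and w b :: "nat \<Rightarrow> real" and beta :: real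
  assumes "\<forall>l<M. w l > 0" "\<forall>l<M. b l > 0" "beta > 0"
    and "(\<Sum>i<M. min (b i) (beta * sqrt (w i))) = 1"
  shows "((\<lambda>eps. Delta_bar M w eps (r_star w b beta eps)) \<longlongrightarrow>
            (\<Sum>i<M. w i / min (b i) (beta * sqrt (w i)) + w i)) (at_right 0)"
proof -
  define c where "c i = min (b i) (beta * sqrt (w i))" for i
  define F where "F eps = (\<Sum>l<M. w l / c l * exp (eps * x_star eps * (1 - c l)))
       * ((1 + x_star eps) / x_star eps) + (\<Sum>l<M. w l)" for eps
  have ev: "eventually (\<lambda>eps. F eps = Delta_bar M w eps (r_star w b beta eps)) (at_right 0)"
    unfolding eventually_at_right_less
  proof (rule eventually_at_rightI[of 0 1], goal_cases)
    case (1 eps)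
    hence e: "eps > 0" by simp
    have xp: "x_star eps > 0" using xs_pos e .
    have S: "Ssum M (r_star w b beta eps) = x_star eps"
      unfolding Ssum_def r_star_def by (simp add: sum_distrib_right[symmetric] assms(4))
    have "(\<Sum>l<M. w l * exp (- r_star w b beta eps l * eps) / r_star w b beta eps l) *
          exp (eps * x_star eps) * (1 + x_star eps)
        = (\<Sum>l<M. w l * exp (- r_star w b beta eps l * eps) / r_star w b beta eps l *
          exp (eps * x_star eps) * (1 + x_star eps))" by (simp add: sum_distrib_right)
    also have "\<dots> = (\<Sum>l<M. w l / c l * exp (eps * x_star eps * (1 - c l)) * ((1 + x_star eps) / x_star eps))"
    proof (rule sum.cong[OF refl])
      fix l assume "l \<in> {..<M}"
      hence cp: "c l > 0" using assms by (simp add: c_def)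
      have "exp (- (c l * x_star eps) * eps) * exp (eps * x_star eps) = exp (eps * x_star eps * (1 - c l))"
        by (simp add: exp_add[symmetric] algebra_simps)
      thus "w l * exp (- r_star w b beta eps l * eps) / r_star w b beta eps l *
          exp (eps * x_star eps) * (1 + x_star eps) = w l / c l * exp (eps * x_star eps * (1 - c l)) * ((1 + x_star eps) / x_star eps)"
        using cp xp unfolding r_star_def c_def[symmetric]
        by (simp add: field_simps)
    qed
    also have "\<dots> = (\<Sum>l<M. w l / c l * exp (eps * x_star eps * (1 - c l))) * ((1 + x_star eps) / x_star eps)"
      by (rule sum_distrib_right[symmetric])
    finally show ?case unfolding F_def Delta_bar_def S by simp
  qed simp
  have l1: "((\<lambda>eps::real. eps * x_star eps) \<longlongrightarrow> 0) (at_right 0)"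
    unfolding x_star_def by real_asymp
  have l2: "((\<lambda>eps::real. (1 + x_star eps) / x_star eps) \<longlongrightarrow> 1) (at_right 0)"
    unfolding x_star_def by real_asymp
  have "(F \<longlongrightarrow> (\<Sum>l<M. w l / c l * exp (0 * (1 - c l))) * 1 + (\<Sum>l<M. w l)) (at_right 0)"
    unfolding F_def by (intro tendsto_intros l1 l2)
  hence "(F \<longlongrightarrow> (\<Sum>i<M. w i / c i + w i)) (at_right 0)" by (simp add: sum.distrib)
  from tendsto_cong[OF ev] this show ?thesis unfolding c_def by simp
qed

theorem corollary1:
  fixes M :: nat and w b :: "nat \<Rightarrow> real" and beta :: real
  assumes "M \<ge> 1"
    and "\<forall>l<M. w l > 0"
    and "\<forall>l<M. b l > 0"
    and "(\<Sum>i<M. b i) \<ge> 1"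
    and "0 \<le> beta" and "beta \<le> (MAX l\<in>{..<M}. b l / sqrt (w l))"
    and "(\<Sum>i<M. min (b i) (beta * sqrt (w i))) = 1"
  shows "((\<lambda>eps. \<bar>Delta_bar M w eps (r_star w b beta eps) - Delta_opt M w b eps\<bar>)
            \<longlongrightarrow> 0) (at_right 0)
    \<and> (Delta_opt M w b \<longlongrightarrow>
            (\<Sum>i<M. w i / min (b i) (beta * sqrt (w i)) + w i)) (at_right 0)"
proof -
  define L where "L = (\<Sum>i<M. w i / min (b i) (beta * sqrt (w i)) + w i)"
  have bp: "beta > 0"
  proof (rule ccontr)
    assume "\<not> beta > 0"
    hence "beta = 0" using assms(5) by simp
    hence "(\<Sum>i<M. min (b i) (beta * sqrt (w i))) = 0" using assms(3)
      by (intro sum.neutral) (auto simp: min_def)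
    with assms(7) show False by simp
  qed
  have lim: "((\<lambda>eps. Delta_bar M w eps (r_star w b beta eps)) \<longlongrightarrow> L) (at_right 0)"
    unfolding L_def using rstar_lim[OF assms(2,3) bp assms(7)] .
  have bnds: "L \<le> Delta_opt M w b eps \<and> Delta_opt M w b eps \<le> Delta_bar M w eps (r_star w b beta eps)"
    if e: "eps > 0" for eps
  proof
    let ?A = "{Delta_bar M w eps r | r. feasible M b eps r}"
    have f: "feasible M b eps (r_star w b beta eps)" using feas[OF assms(2,3) bp e assms(7)] .
    have ne: "?A \<noteq> {}" using f by blast
    have lb: "\<And>y. y \<in> ?A \<Longrightarrow> L \<le> y" unfolding L_def
      using lower[OF assms(2,3) bp e assms(7)] by blast
    show "L \<le> Delta_opt M w b eps" unfolding Delta_opt_def using ne lb by (intro cInf_greatest) auto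
    have "bdd_below ?A" using lb by (auto simp: bdd_below_def)
    thus "Delta_opt M w b eps \<le> Delta_bar M w eps (r_star w b beta eps)"
      unfolding Delta_opt_def using f by (intro cInf_lower) auto
  qed
  have ev1: "eventually (\<lambda>eps. L \<le> Delta_opt M w b eps) (at_right 0)"
    using eventually_at_right_less[of 0] by (rule eventually_mono) (use bnds in auto)
  have ev2: "eventually (\<lambda>eps. Delta_opt M w b eps \<le> Delta_bar M w eps (r_star w b beta eps)) (at_right 0)"
    using eventually_at_right_less[of 0] by (rule eventually_mono) (use bnds in auto)
  have lo: "(Delta_opt M w b \<longlongrightarrow> L) (at_right 0)"
    by (rule tendsto_sandwich[OF ev1 ev2 tendsto_const lim])
  have "((\<lambda>eps. Delta_bar M w eps (r_star w b beta eps) - Delta_opt M w b eps) \<longlongrightarrow> L - L) (at_right 0)"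
    by (intro tendsto_intros lim lo)
  hence "((\<lambda>eps. \<bar>Delta_bar M w eps (r_star w b beta eps) - Delta_opt M w b eps\<bar>) \<longlongrightarrow> \<bar>L - L\<bar>) (at_right 0)"
    by (rule tendsto_rabs)
  thus ?thesis using lo unfolding L_def by simp
qed

end
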